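(* Let $S$ be a $\Gamma$-hemiring, let $\mu$ be a prime fuzzy h-ideal of $S$ and let $x\in\mu_0$. Then $\langle x,\mu\rangle=\mathbf{1}_S$, the constant function with value $1$ on $S$.
   Context: A $\Gamma$-hemiring is a pair of additive commutative semigroups with zero $S$ and $\Gamma$ with a map $S\times\Gamma\times S\to S$, $(a,\alpha,b)\mapsto a\alpha b$, such that for all $a,b,c\in S$, $\alpha,\beta\in\Gamma$: $(a+b)\alpha c=a\alpha c+b\alpha c$; $a\alpha(b+c)=a\alpha b+a\alpha c$; $a(\alpha+\beta)b=a\alpha b+a\beta b$; $a\alpha(b\beta c)=(a\alpha b)\beta c$; $0\alpha a=0=a\alpha0$; $a0b=0=b0a$. A fuzzy h-ideal of $S$ is a map $\mu:S\to[0,1]$, not identically $0$, such that for all $x,y,a,b,z\in S$, $\gamma\in\Gamma$: $\mu(x+y)\ge\min\{\mu(x),\mu(y)\}$; $\mu(x\gamma y)\ge\mu(x)$ and $\mu(x\gamma y)\ge\mu(y)$; $x+a+z=b+z$ implies $\mu(x)\ge\min\{\mu(a),\mu(b)\}$. For fuzzy subsets $\sigma,\theta$, the h-product is $(\sigma\Gamma_h\theta)(x)=\sup\min\{\sigma(a_1),\sigma(a_2),\theta(b_1),\theta(b_2)\}$, the supremum over all $z,a_1,a_2,b_1,b_2\in S$, $\gamma,\delta\in\Gamma$ with $x+a_1\gamma b_1+z=a_2\delta b_2+z$, and $0$ if no such expression exists. Inclusion means pointwise $\le$. A fuzzy h-ideal $\mu$ is prime if it is not constant and for any fuzzy h-ideals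 $\sigma,\theta$, $\sigma\Gamma_h\theta\subseteq\mu$ implies $\sigma\subseteq\mu$ or $\theta\subseteq\mu$. $\mu_0=\{x\in S:\mu(x)=\mu(0)\}$. The extension of $\mu$ by $x$ is $\langle x,\mu\rangle(y)=\inf_{s\in S,\ \alpha,\gamma\in\Gamma}\mu(x\alpha s\gamma y)$. *)

theory Defs
  imports Complex_Main
begin

text \<open>A Gamma-hemiring: S = 'a and Gamma = 'g are additive commutative monoids
(commutative semigroups with zero), with ternary product m a g b = a g b.\<close>

definition gamma_hemiring :: "('a::comm_monoid_add \<Rightarrow> 'g::comm_monoid_add \<Rightarrow> 'a \<Rightarrow> 'a) \<Rightarrow> bool" where
  "gamma_hemiring m \<longleftrightarrow>
     (\<forall>a b c \<alpha>. m (a + b) \<alpha> c = m a \<alpha> c + m b \<alpha> c) \<and>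
     (\<forall>a b c \<alpha>. m a \<alpha> (b + c) = m a \<alpha> b + m a \<alpha> c) \<and>
     (\<forall>a b \<alpha> \<beta>. m a (\<alpha> + \<beta>) b = m a \<alpha> b + m a \<beta> b) \<and>
     (\<forall>a b c \<alpha> \<beta>. m a \<alpha> (m b \<beta> c) = m (m a \<alpha> b) \<beta> c) \<and>
     (\<forall>a \<alpha>. m 0 \<alpha> a = 0 \<and> m a \<alpha> 0 = 0) \<and>
     (\<forall>a b. m a 0 b = 0 \<and> m b 0 a = 0)"

definition fuzzy_h_ideal :: "('a::comm_monoid_add \<Rightarrow> 'g \<Rightarrow> 'a \<Rightarrow> 'a) \<Rightarrow> ('a \<Rightarrow> real) \<Rightarrow> bool" where
  "fuzzy_h_ideal m \<mu> \<longleftrightarrow>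
     (\<forall>x. 0 \<le> \<mu> x \<and> \<mu> x \<le> 1) \<and>
     (\<exists>x. \<mu> x \<noteq> 0) \<and>
     (\<forall>x y. \<mu> (x + y) \<ge> min (\<mu> x) (\<mu> y)) \<and>
     (\<forall>x \<gamma> y. \<mu> (m x \<gamma> y) \<ge> \<mu> x \<and> \<mu> (m x \<gamma> y) \<ge> \<mu> y) \<and>
     (\<forall>x a b z. x + a + z = b + z \<longrightarrow> \<mu> x \<ge> min (\<mu> a) (\<mu> b))"

definition h_product :: "('a::comm_monoid_add \<Rightarrow> 'g \<Rightarrow> 'a \<Rightarrow> 'a) \<Rightarrow> ('a \<Rightarrow> real) \<Rightarrow> ('a \<Rightarrow> real) \<Rightarrow> 'a \<Rightarrow> real" where
  "h_product m \<sigma> \<theta> x =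
     (let V = {min (min (\<sigma> a1) (\<sigma> a2)) (min (\<theta> b1) (\<theta> b2)) | z a1 a2 b1 b2 \<gamma> \<delta>.
                 x + m a1 \<gamma> b1 + z = m a2 \<delta> b2 + z}
      in if V = {} then 0 else Sup V)"

definition prime_fuzzy_h_ideal :: "('a::comm_monoid_add \<Rightarrow> 'g \<Rightarrow> 'a \<Rightarrow> 'a) \<Rightarrow> ('a \<Rightarrow> real) \<Rightarrow> bool" where
  "prime_fuzzy_h_ideal m \<mu> \<longleftrightarrow>
     fuzzy_h_ideal m \<mu> \<and> (\<exists>x y. \<mu> x \<noteq> \<mu> y) \<and>
     (\<forall>\<sigma> \<theta>. fuzzy_h_ideal m \<sigma> \<longrightarrow> fuzzy_h_ideal m \<theta> \<longrightarrow>
        (\<forall>x. h_product m \<sigma> \<theta> x \<le> \<mu> x) \<longrightarrow>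
        (\<forall>x. \<sigma> x \<le> \<mu> x) \<or> (\<forall>x. \<theta> x \<le> \<mu> x))"

definition zero_level :: "('a::comm_monoid_add \<Rightarrow> real) \<Rightarrow> 'a set" where
  "zero_level \<mu> = {x. \<mu> x = \<mu> 0}"

definition extension :: "('a \<Rightarrow> 'g \<Rightarrow> 'a \<Rightarrow> 'a) \<Rightarrow> 'a \<Rightarrow> ('a \<Rightarrow> real) \<Rightarrow> 'a \<Rightarrow> real" where
  "extension m x \<mu> y = (INF p \<in> (UNIV :: ('a \<times> 'g \<times> 'g) set).
      \<mu> (m (m x (fst (snd p)) (fst p)) (snd (snd p)) y))"

end

theory Submission
  imports Defs
begin

lemma mono_fuzzy:
  assumes F: "fuzzy_h_ideal m \<mu>" and t: "\<forall>y. \<mu> y \<le> t"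
  shows "fuzzy_h_ideal m (\<lambda>y. if t \<le> \<mu> y then 1 else \<mu> y)"
proof -
  let ?g = "\<lambda>u::real. if t \<le> u then 1 else u"
  have mono: "\<And>u v. u \<le> v \<Longrightarrow> v \<le> 1 \<Longrightarrow> ?g u \<le> ?g v" by auto
  from F have b: "\<forall>x. 0 \<le> \<mu> x \<and> \<mu> x \<le> 1" and nz: "\<exists>x. \<mu> x \<noteq> 0"
    and ad: "\<forall>x y. \<mu> (x + y) \<ge> min (\<mu> x) (\<mu> y)"
    and mu: "\<forall>x \<gamma> y. \<mu> (m x \<gamma> y) \<ge> \<mu> x \<and> \<mu> (m x \<gamma> y) \<ge> \<mu> y"
    and h: "\<forall>x a b z. x + a + z = b + z \<longrightarrow> \<mu> x \<ge> min (\<mu> a) (\<mu> b)"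
    unfolding fuzzy_h_ideal_def by blast+
  show ?thesis unfolding fuzzy_h_ideal_def
  proof (intro conjI allI impI)
    fix x show "0 \<le> ?g (\<mu> x)" "?g (\<mu> x) \<le> 1" using b by auto
  next
    obtain w where "\<mu> w \<noteq> 0" using nz by blast
    then show "\<exists>x. ?g (\<mu> x) \<noteq> 0" by (intro exI[of _ w]) simp
  next
    fix x y show "min (?g (\<mu> x)) (?g (\<mu> y)) \<le> ?g (\<mu> (x + y))"
      using ad[rule_format, of x y] b[rule_format, of "x+y"]
      by (cases "t \<le> \<mu> x"; cases "t \<le> \<mu> y"; cases "t \<le> \<mu> (x+y)") (auto simp: min_def split: if_split_asm)
  next
    fix x \<gamma> y
    show "?g (\<mu> x) \<le> ?g (\<mu> (m x \<gamma> y))" using mono[of "\<mu> x" "\<mu> (m x \<gamma> y)"] mu b by blast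
    show "?g (\<mu> y) \<le> ?g (\<mu> (m x \<gamma> y))" using mono[of "\<mu> y" "\<mu> (m x \<gamma> y)"] mu b by blast
  next
    fix x a b' z :: 'a assume "x + a + z = b' + z"
    then have "\<mu> x \<ge> min (\<mu> a) (\<mu> b')" using h by blast
    then show "min (?g (\<mu> a)) (?g (\<mu> b')) \<le> ?g (\<mu> x)"
      using b[rule_format, of x]
      by (cases "t \<le> \<mu> a"; cases "t \<le> \<mu> b'"; cases "t \<le> \<mu> x") (auto simp: min_def split: if_split_asm)
  qed
qed

lemma const_fuzzy:
  assumes "0 < c" "c \<le> 1"
  shows "fuzzy_h_ideal m (\<lambda>_. c)"
  using assms unfolding fuzzy_h_ideal_def by auto

lemma mu0_one:
  assumes H: "gamma_hemiring m" and P: "prime_fuzzy_h_ideal m \<mu>"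
  shows "\<mu> 0 = 1" and "\<forall>y. \<mu> y \<le> \<mu> 0"
proof -
  have F: "fuzzy_h_ideal m \<mu>" using P unfolding prime_fuzzy_h_ideal_def by blast
  from F have b: "\<forall>x. 0 \<le> \<mu> x \<and> \<mu> x \<le> 1" and nz: "\<exists>x. \<mu> x \<noteq> 0"
    and mu: "\<forall>x \<gamma> y. \<mu> (m x \<gamma> y) \<ge> \<mu> x \<and> \<mu> (m x \<gamma> y) \<ge> \<mu> y"
    and h: "\<forall>x a b z. x + a + z = b + z \<longrightarrow> \<mu> x \<ge> min (\<mu> a) (\<mu> b)"
    unfolding fuzzy_h_ideal_def by blast+
  have z: "\<And>\<gamma> y. m 0 \<gamma> y = 0" using H unfolding gamma_hemiring_def by blast
  show le: "\<forall>y. \<mu> y \<le> \<mu> 0"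
  proof
    fix y
    obtain \<gamma> :: 'b where True by blast
    have "\<mu> (m 0 \<gamma> y) \<ge> \<mu> y" using mu by blast
    then show "\<mu> y \<le> \<mu> 0" using z by simp
  qed
  define t where "t = \<mu> 0"
  have tpos: "0 < t"
  proof -
    obtain w where "\<mu> w \<noteq> 0" using nz by blast
    then have "0 < \<mu> w" using b by (metis less_eq_real_def)
    then show ?thesis using le t_def by (metis order_less_le_trans)
  qed
  have t1: "t \<le> 1" using b t_def by auto
  show "\<mu> 0 = 1"
  proof (rule ccontr)
    assume "\<mu> 0 \<noteq> 1"
    then have tl: "t < 1" using t1 t_def by auto
    let ?\<sigma> = "\<lambda>_::'a. t"
    let ?\<theta> = "\<lambda>y. if t \<le> \<mu> y then 1 else \<mu> y"
    have Fs: "fuzzy_h_ideal m ?\<sigma>" using const_fuzzy tpos t1 by blast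
    have Ft: "fuzzy_h_ideal m ?\<theta>" using mono_fuzzy[OF F] le t_def by auto
    have prod: "\<forall>x. h_product m ?\<sigma> ?\<theta> x \<le> \<mu> x"
    proof
      fix x
      let ?V = "{min (min (?\<sigma> a1) (?\<sigma> a2)) (min (?\<theta> b1) (?\<theta> b2)) | z a1 a2 b1 b2 \<gamma> \<delta>.
                 x + m a1 \<gamma> b1 + z = m a2 \<delta> b2 + z}"
      have bound: "\<forall>v\<in>?V. v \<le> \<mu> x"
      proof
        fix v assume "v \<in> ?V"
        then obtain z a1 a2 b1 b2 \<gamma> \<delta> where e: "x + m a1 \<gamma> b1 + z = m a2 \<delta> b2 + z"
          and v: "v = min (min t t) (min (?\<theta> b1) (?\<theta> b2))" by blast
        have "\<mu> x \<ge> min (\<mu> (m a1 \<gamma> b1)) (\<mu> (m a2 \<delta> b2))" using h e by blast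
        moreover have "\<mu> (m a1 \<gamma> b1) \<ge> \<mu> b1" "\<mu> (m a2 \<delta> b2) \<ge> \<mu> b2" using mu by blast+
        ultimately have "\<mu> x \<ge> min (\<mu> b1) (\<mu> b2)" by linarith
        then show "v \<le> \<mu> x" using v le[rule_format, of b1] le[rule_format, of b2] t_def
          by (cases "t \<le> \<mu> b1"; cases "t \<le> \<mu> b2") (auto simp: min_def)
      qed
      show "h_product m ?\<sigma> ?\<theta> x \<le> \<mu> x"
        unfolding h_product_def Let_def
      proof (cases "?V = {}")
        case True then show "(if ?V = {} then 0 else Sup ?V) \<le> \<mu> x" using b[rule_format, of x] by simp
      next
        case False
        have "Sup ?V \<le> \<mu> x" by (rule cSup_least[OF False]) (use bound in blast)
        then show "(if ?V = {} then 0 else Sup ?V) \<le> \<mu> x" unfolding if_not_P[OF False] .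
      qed
    qed
    have "(\<forall>x. ?\<sigma> x \<le> \<mu> x) \<or> (\<forall>x. ?\<theta> x \<le> \<mu> x)"
      using P Fs Ft prod unfolding prime_fuzzy_h_ideal_def by blast
    moreover have "\<not> (\<forall>x. ?\<sigma> x \<le> \<mu> x)"
    proof
      assume "\<forall>x. ?\<sigma> x \<le> \<mu> x"
      then have "\<forall>x. \<mu> x = t" using le t_def by (simp add: order_antisym)
      then show False using P unfolding prime_fuzzy_h_ideal_def by auto
    qed
    moreover have "\<not> (\<forall>x. ?\<theta> x \<le> \<mu> x)"
    proof
      assume "\<forall>x. ?\<theta> x \<le> \<mu> x"
      then have "?\<theta> 0 \<le> \<mu> 0" by blast
      then show False using tl t_def by simp
    qed
    ultimately show False by blast
  qed
qed

theorem theorem3p22: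
  fixes m :: "'a::comm_monoid_add \<Rightarrow> 'g::comm_monoid_add \<Rightarrow> 'a \<Rightarrow> 'a"
    and \<mu> :: "'a \<Rightarrow> real" and x :: 'a
  assumes "gamma_hemiring m"
    and "prime_fuzzy_h_ideal m \<mu>"
    and "x \<in> zero_level \<mu>"
  shows "extension m x \<mu> = (\<lambda>_. 1)"
proof
  fix y
  have F: "fuzzy_h_ideal m \<mu>" using assms(2) unfolding prime_fuzzy_h_ideal_def by blast
  from F have b: "\<forall>x. 0 \<le> \<mu> x \<and> \<mu> x \<le> 1"
    and mu: "\<forall>x \<gamma> y. \<mu> (m x \<gamma> y) \<ge> \<mu> x \<and> \<mu> (m x \<gamma> y) \<ge> \<mu> y"
    unfolding fuzzy_h_ideal_def by blast+
  have x1: "\<mu> x = 1" using assms(3) mu0_one[OF assms(1,2)] unfolding zero_level_def by simp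
  have all: "\<And>p. \<mu> (m (m x (fst (snd p)) (fst p)) (snd (snd p)) y) = 1"
  proof -
    fix p :: "'a \<times> 'g \<times> 'g"
    have "\<mu> (m (m x (fst (snd p)) (fst p)) (snd (snd p)) y) \<ge> \<mu> (m x (fst (snd p)) (fst p))"
      using mu by blast
    moreover have "\<mu> (m x (fst (snd p)) (fst p)) \<ge> \<mu> x" using mu by blast
    ultimately show "\<mu> (m (m x (fst (snd p)) (fst p)) (snd (snd p)) y) = 1"
      using x1 b[rule_format, of "m (m x (fst (snd p)) (fst p)) (snd (snd p)) y"] by linarith
  qed
  show "extension m x \<mu> y = 1"
    unfolding extension_def using all by simp
qed

end
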